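(* Fix $\lambda>0$ and Lipschitz functions $\phi,\phi_1,\phi_2:\mathbb R\to\mathbb R$ bounded from below. Then $\mathcal M^\lambda\phi$ is $L_l$-Lipschitz and $$\mathcal M^\lambda\phi(x)=-\lambda\log\mathbb E_{\zeta\sim\Phi_x}\big[e^{-(\phi(x+\zeta)+l(\zeta))/\lambda}\big],\quad x\in\mathbb R.$$ Moreover, there exist $\kappa_1,\kappa_2>0$ such that, with $\delta_t:=2\kappa_1e^{-\kappa_2t^2}$, for each $x\in\mathbb R$ the probability measure $\mu_x$ defined by $\frac{d\mu_x}{d\Phi_x}(\xi)\propto e^{-(\phi(x+\xi)+l(\xi))/\lambda}$ satisfies $\mathbb P(|x+\xi|>t)\le\delta_t$ for all $t\ge0$ when $\xi\sim\mu_x$, and $$\mathcal M^\lambda\phi(x)=\mathbb E_{\xi\sim\mu_x}[\phi(x+\xi)+l(\xi)]+\lambda D_{KL}(\mu_x\|\Phi_x).$$ Furthermore, for every $R>0$ there is $\mathscr E_R>0$ with $\lim_{R\to\infty}\mathscr E_R=0$ such that $\|\mathcal M^\lambda\phi_1-\mathcal M^\lambda\phi_2\|_{L^\infty(\mathbb R)}\le\|\phi_1-\phi_2\|_{L^\infty([-R,R])}+\mathscr E_R$.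
   Context: Let $l:\mathbb R\to\mathbb R$ satisfy: there is $K>0$ with $\inf l=l(0)=K$ and $l(x)+l(y)\ge l(x+y)+K$ for all $x,y$; $l(\xi)\to+\infty$ as $|\xi|\to\infty$; $l$ is $L_l$-Lipschitz for some $L_l>0$. For $x\in\mathbb R$, $\Phi_x=\mathcal N(-x,1)$. For $\lambda>0$ and $\phi$ bounded below, $\mathcal M^\lambda\phi(x)=\inf\{\int_{\mathbb R}(\phi(x+\xi)+l(\xi))\mu(d\xi)+\lambda D_{KL}(\mu\|\Phi_x)\}$, infimum over probability measures $\mu\ll\Phi_x$, with $D_{KL}(\mu\|\Phi_x)=\int\frac{d\mu}{d\Phi_x}\log\frac{d\mu}{d\Phi_x}\,d\Phi_x$. *)

theory Defs
  imports "HOL-Probability.Probability"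
begin

definition Phi :: "real \<Rightarrow> real measure" where
  "Phi x = density lborel (normal_density (-x) 1)"

text \<open>Extended-real integral, used only for integrands bounded below on probability
  spaces: equals the Lebesgue integral when integrable and +infinity otherwise.\<close>
definition ext_int :: "real measure \<Rightarrow> (real \<Rightarrow> real) \<Rightarrow> ereal" where
  "ext_int M g = (if integrable M g then ereal (integral\<^sup>L M g) else \<infinity>)"

definition KL_div :: "real measure \<Rightarrow> real measure \<Rightarrow> ereal" where
  "KL_div mu nu = ext_int nu
     (\<lambda>\<xi>. enn2real (RN_deriv nu mu \<xi>) * ln (enn2real (RN_deriv nu mu \<xi>)))"

definition admissible :: "real \<Rightarrow> real measure set" where
  "admissible x = {mu. prob_space mu \<and> sets mu = sets borel \<and> absolutely_continuous (Phi x) mu}"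

definition objective ::
  "(real \<Rightarrow> real) \<Rightarrow> real \<Rightarrow> (real \<Rightarrow> real) \<Rightarrow> real \<Rightarrow> real measure \<Rightarrow> ereal" where
  "objective l lam \<phi> x mu =
     ext_int mu (\<lambda>\<xi>. \<phi> (x + \<xi>) + l \<xi>) + ereal lam * KL_div mu (Phi x)"

definition Mop :: "(real \<Rightarrow> real) \<Rightarrow> real \<Rightarrow> (real \<Rightarrow> real) \<Rightarrow> real \<Rightarrow> ereal" where
  "Mop l lam \<phi> x = (INF mu \<in> admissible x. objective l lam \<phi> x mu)"

definition gibbs_weight :: "(real \<Rightarrow> real) \<Rightarrow> real \<Rightarrow> (real \<Rightarrow> real) \<Rightarrow> real \<Rightarrow> real \<Rightarrow> real" where
  "gibbs_weight l lam \<phi> x \<xi> = exp (- (\<phi> (x + \<xi>) + l \<xi>) / lam)"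

definition mu_opt :: "(real \<Rightarrow> real) \<Rightarrow> real \<Rightarrow> (real \<Rightarrow> real) \<Rightarrow> real \<Rightarrow> real measure" where
  "mu_opt l lam \<phi> x = density (Phi x)
     (\<lambda>\<xi>. ennreal (gibbs_weight l lam \<phi> x \<xi> / integral\<^sup>L (Phi x) (gibbs_weight l lam \<phi> x)))"

end

theory Submission
  imports Defs "HOL-Real_Asymp.Real_Asymp"
begin


lemma gibbs_lower:
  fixes N mu :: "real measure" and h :: "real \<Rightarrow> real"
  assumes N: "prob_space N" and mu: "prob_space mu" "sets mu = sets N" "absolutely_continuous N mu"
   and h[measurable]: "h \<in> borel_measurable N" and hb: "\<forall>\<xi>. c \<le> h \<xi>" and lam: "lam > 0"
  shows "ereal (- lam * ln (integral\<^sup>L N (\<lambda>\<xi>. exp (- h \<xi> / lam)))) \<le> ext_int mu h + ereal lam * KL_div mu N"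
proof -
  interpret N: prob_space N by fact
  interpret mu: prob_space mu by fact
  define F where "F = RN_deriv N mu"
  define f where "f \<xi> = enn2real (F \<xi>)" for \<xi>
  have Fm[measurable]: "F \<in> borel_measurable N" unfolding F_def by simp
  have fm[measurable]: "f \<in> borel_measurable N" unfolding f_def by simp
  have fnn: "\<And>\<xi>. 0 \<le> f \<xi>" unfolding f_def by simp
  have dens: "density N F = mu" unfolding F_def using N.density_RN_deriv mu by simp
  have fin: "AE \<xi> in N. F \<xi> \<noteq> \<infinity>" unfolding F_def
    by (rule N.RN_deriv_finite) (use mu mu.sigma_finite_measure_axioms in auto)
  have dens2: "density N (\<lambda>\<xi>. ennreal (f \<xi>)) = mu"
    unfolding dens[symmetric] f_def
    by (rule density_cong) (use fin in \<open>auto simp: top.not_eq_extremum\<close>)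
  have hmu[measurable]: "h \<in> borel_measurable mu" using h mu(2) by (simp cong: measurable_cong_sets)
  have int_mu: "\<And>g. g \<in> borel_measurable N \<Longrightarrow> integral\<^sup>L mu g = integral\<^sup>L N (\<lambda>x. f x * g x)"
    unfolding dens2[symmetric] by (subst integral_density) (auto simp: fnn)
  have intb_mu: "\<And>g. g \<in> borel_measurable N \<Longrightarrow> integrable mu g \<longleftrightarrow> integrable N (\<lambda>x. f x * g x)"
    unfolding dens2[symmetric] by (subst integrable_density) (auto simp: fnn)
  define Z where "Z = integral\<^sup>L N (\<lambda>\<xi>. exp (- h \<xi> / lam))"
  have intw: "integrable N (\<lambda>\<xi>. exp (- h \<xi> / lam))"
  proof (rule N.integrable_const_bound[where B="exp (- c / lam)"])
    show "AE x in N. norm (exp (- h x / lam)) \<le> exp (- c / lam)"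
      using hb lam by (auto simp: divide_right_mono)
  qed simp
  have Zpos: "Z > 0"
  proof -
    have "Z \<ge> 0" unfolding Z_def by simp
    moreover have "Z \<noteq> 0"
    proof
      assume "Z = 0"
      then have "AE x in N. exp (- h x / lam) = 0" unfolding Z_def
        using integral_nonneg_eq_0_iff_AE[OF intw] by simp
      then show False by simp
    qed
    ultimately show ?thesis by simp
  qed
  have KLeq: "KL_div mu N = ext_int N (\<lambda>\<xi>. f \<xi> * ln (f \<xi>))"
    unfolding KL_div_def f_def F_def ..
  have nm1: "ext_int mu h \<noteq> -\<infinity>" "ext_int N (\<lambda>\<xi>. f \<xi> * ln (f \<xi>)) \<noteq> -\<infinity>"
    unfolding ext_int_def by auto
  show ?thesis
  proof (cases "integrable mu h \<and> integrable N (\<lambda>\<xi>. f \<xi> * ln (f \<xi>))")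
    case False
    then have "ext_int mu h = \<infinity> \<or> ext_int N (\<lambda>\<xi>. f \<xi> * ln (f \<xi>)) = \<infinity>"
      unfolding ext_int_def by auto
    then have S: "ext_int mu h + ereal lam * KL_div mu N = \<infinity>"
      using nm1 lam unfolding KLeq
      by (cases "ext_int mu h"; cases "ext_int N (\<lambda>\<xi>. f \<xi> * ln (f \<xi>))") auto
    show ?thesis unfolding S by simp
  next
    case True
    then have i1: "integrable mu h" and i2: "integrable N (\<lambda>\<xi>. f \<xi> * ln (f \<xi>))" by auto
    have i3: "integrable N (\<lambda>\<xi>. f \<xi> * h \<xi>)" using i1 intb_mu[of h] by simp
    have i4: "integrable N f" using intb_mu[of "\<lambda>_. 1"] by simp
    have f1: "integral\<^sup>L N f = 1" using int_mu[of "\<lambda>_. 1"] mu.prob_space by simp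
    define g where "g \<xi> = exp (- h \<xi> / lam) / Z" for \<xi>
    have gpos: "g \<xi> > 0" for \<xi> unfolding g_def using Zpos by simp
    have lng: "ln (g \<xi>) = - h \<xi> / lam - ln Z" for \<xi> unfolding g_def using Zpos by (simp add: ln_div)
    have i5: "integrable N g" unfolding g_def using intw by simp
    have g1: "integral\<^sup>L N g = 1" unfolding g_def using Zpos by (simp add: Z_def)
    have pw: "lam * f \<xi> - lam * g \<xi> - lam * ln Z * f \<xi> \<le> f \<xi> * h \<xi> + lam * (f \<xi> * ln (f \<xi>))" for \<xi>
    proof (cases "f \<xi> = 0")
      case True then show ?thesis using gpos[of \<xi>] lam by simp
    next
      case False
      then have fp: "f \<xi> > 0" using fnn[of \<xi>] by simp
      have "ln (g \<xi> / f \<xi>) \<le> g \<xi> / f \<xi> - 1" using gpos[of \<xi>] fp by (intro ln_le_minus_one) simp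
      then have "ln (g \<xi>) - ln (f \<xi>) \<le> g \<xi> / f \<xi> - 1" using gpos[of \<xi>] fp by (simp add: ln_div)
      then have "lam * f \<xi> * (ln (g \<xi>) - ln (f \<xi>)) \<le> lam * f \<xi> * (g \<xi> / f \<xi> - 1)"
        using fp lam by (intro mult_left_mono) auto
      also have "lam * f \<xi> * (g \<xi> / f \<xi> - 1) = lam * g \<xi> - lam * f \<xi>"
        using fp by (simp add: field_simps)
      also have "lam * f \<xi> * (ln (g \<xi>) - ln (f \<xi>)) = - f \<xi> * h \<xi> - lam * ln Z * f \<xi> - lam * (f \<xi> * ln (f \<xi>))"
        unfolding lng using lam by (simp add: field_simps)
      finally show ?thesis by linarith
    qed
    have "integral\<^sup>L N (\<lambda>\<xi>. lam * f \<xi> - lam * g \<xi> - lam * ln Z * f \<xi>)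
        \<le> integral\<^sup>L N (\<lambda>\<xi>. f \<xi> * h \<xi> + lam * (f \<xi> * ln (f \<xi>)))"
      by (rule integral_mono) (use i2 i3 i4 i5 pw in auto)
    also have "integral\<^sup>L N (\<lambda>\<xi>. lam * f \<xi> - lam * g \<xi> - lam * ln Z * f \<xi>) = - lam * ln Z"
      using i4 i5 f1 g1 by simp
    also have "integral\<^sup>L N (\<lambda>\<xi>. f \<xi> * h \<xi> + lam * (f \<xi> * ln (f \<xi>)))
        = integral\<^sup>L mu h + lam * integral\<^sup>L N (\<lambda>\<xi>. f \<xi> * ln (f \<xi>))"
      using i2 i3 int_mu[of h] by simp
    finally show ?thesis using i1 i2 unfolding KLeq Z_def ext_int_def by simp
  qed
qed

lemma exp_h_bound:
  fixes lam c t :: real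
  assumes lam: "lam > 0" and ct: "c \<le> t"
  shows "\<bar>exp (- t / lam) * t\<bar> \<le> lam + \<bar>c\<bar> * exp (\<bar>c\<bar> / lam)"
proof (cases "t \<ge> 0")
  case True
  have "exp (t / lam) \<ge> 1 + t / lam" by (rule exp_ge_add_one_self)
  then have "t \<le> lam * exp (t / lam)" using lam by (simp add: field_simps)
  then have "exp (- t / lam) * t \<le> lam"
    by (simp add: exp_minus field_simps)
  moreover have "0 \<le> \<bar>c\<bar> * exp (\<bar>c\<bar> / lam)" by simp
  moreover have "\<bar>exp (- t / lam) * t\<bar> = exp (- t / lam) * t" using True by simp
  ultimately show ?thesis by linarith
next
  case False
  then have "\<bar>t\<bar> \<le> \<bar>c\<bar>" using ct by simp
  moreover have "exp (- t / lam) \<le> exp (\<bar>c\<bar> / lam)"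
  proof -
    have "- t / lam \<le> \<bar>c\<bar> / lam" using lam \<open>\<bar>t\<bar> \<le> \<bar>c\<bar>\<close> False by (intro divide_right_mono) auto
    then show ?thesis by simp
  qed
  ultimately have "\<bar>exp (- t / lam) * t\<bar> \<le> \<bar>c\<bar> * exp (\<bar>c\<bar> / lam)"
    by (simp add: abs_mult mult_mono' mult.commute)
  then show ?thesis using lam by simp
qed

lemma gibbs_opt:
  fixes N :: "real measure" and h :: "real \<Rightarrow> real"
  assumes N: "prob_space N"
   and h[measurable]: "h \<in> borel_measurable N" and hb: "\<forall>\<xi>. c \<le> h \<xi>" and lam: "lam > 0"
  defines "Z \<equiv> integral\<^sup>L N (\<lambda>\<xi>. exp (- h \<xi> / lam))"
  defines "mu \<equiv> density N (\<lambda>\<xi>. ennreal (exp (- h \<xi> / lam) / Z))"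
  shows "Z > 0" "integrable N (\<lambda>\<xi>. exp (- h \<xi> / lam))" "prob_space mu" "sets mu = sets N" "absolutely_continuous N mu"
    "ext_int mu h + ereal lam * KL_div mu N = ereal (- lam * ln Z)"
proof -
  interpret N: prob_space N by fact
  show intw: "integrable N (\<lambda>\<xi>. exp (- h \<xi> / lam))"
  proof (rule N.integrable_const_bound[where B="exp (- c / lam)"])
    show "AE x in N. norm (exp (- h x / lam)) \<le> exp (- c / lam)"
      using hb lam by (auto simp: divide_right_mono)
  qed simp
  show Zpos: "Z > 0"
  proof -
    have "Z \<ge> 0" unfolding Z_def by simp
    moreover have "Z \<noteq> 0"
    proof
      assume "Z = 0"
      then have "AE x in N. exp (- h x / lam) = 0" unfolding Z_def
        using integral_nonneg_eq_0_iff_AE[OF intw] by simp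
      then show False by simp
    qed
    ultimately show ?thesis by simp
  qed
  define g where "g \<xi> = exp (- h \<xi> / lam) / Z" for \<xi>
  have gm[measurable]: "g \<in> borel_measurable N" unfolding g_def by simp
  have gpos: "g \<xi> > 0" for \<xi> unfolding g_def using Zpos by simp
  have lng: "ln (g \<xi>) = - h \<xi> / lam - ln Z" for \<xi> unfolding g_def using Zpos by (simp add: ln_div)
  have i5: "integrable N g" unfolding g_def using intw by simp
  have g1: "integral\<^sup>L N g = 1" unfolding g_def using Zpos by (simp add: Z_def)
  have mu_def': "mu = density N (\<lambda>\<xi>. ennreal (g \<xi>))" unfolding mu_def g_def ..
  show sets: "sets mu = sets N" unfolding mu_def by simp
  show "absolutely_continuous N mu" unfolding mu_def' by (rule absolutely_continuousI_density) simp
  show "prob_space mu"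
  proof (rule prob_spaceI)
    have "emeasure mu (space mu) = (\<integral>\<^sup>+ x. ennreal (g x) \<partial>N)"
      unfolding mu_def' by (simp add: emeasure_density)
    also have "\<dots> = ennreal (integral\<^sup>L N g)"
      using i5 gpos by (intro nn_integral_eq_integral) (auto simp: less_imp_le)
    finally show "emeasure mu (space mu) = 1" using g1 by simp
  qed
  have RN: "AE \<xi> in N. ennreal (g \<xi>) = RN_deriv N mu \<xi>"
    unfolding mu_def' by (rule N.RN_deriv_unique) (auto simp: mu_def')
  have RN2: "AE \<xi> in N. enn2real (RN_deriv N mu \<xi>) = g \<xi>"
    using RN by eventually_elim (use gpos in \<open>metis enn2real_ennreal less_imp_le\<close>)
  have KLeq: "KL_div mu N = ext_int N (\<lambda>\<xi>. g \<xi> * ln (g \<xi>))"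
  proof -
    have AEe: "AE \<xi> in N. enn2real (RN_deriv N mu \<xi>) * ln (enn2real (RN_deriv N mu \<xi>)) = g \<xi> * ln (g \<xi>)"
      using RN2 by eventually_elim simp
    show ?thesis unfolding KL_div_def ext_int_def
      using integrable_cong_AE[OF _ _ AEe] integral_cong_AE[OF _ _ AEe] by simp
  qed
  have gh: "integrable N (\<lambda>\<xi>. g \<xi> * h \<xi>)"
  proof (rule N.integrable_const_bound[where B="(lam + \<bar>c\<bar> * exp (\<bar>c\<bar> / lam)) / Z"])
    show "AE x in N. norm (g x * h x) \<le> (lam + \<bar>c\<bar> * exp (\<bar>c\<bar> / lam)) / Z"
    proof (intro AE_I2)
      fix x
      have "\<bar>exp (- h x / lam) * h x\<bar> \<le> lam + \<bar>c\<bar> * exp (\<bar>c\<bar> / lam)"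
        using exp_h_bound[OF lam] hb by simp
      then show "norm (g x * h x) \<le> (lam + \<bar>c\<bar> * exp (\<bar>c\<bar> / lam)) / Z"
        unfolding g_def using Zpos by (simp add: divide_right_mono abs_mult)
    qed
  qed simp
  have glng: "g \<xi> * ln (g \<xi>) = - (1 / lam) * (g \<xi> * h \<xi>) - ln Z * g \<xi>" for \<xi>
    unfolding lng using lam by (simp add: field_simps)
  have i6: "integrable N (\<lambda>\<xi>. g \<xi> * ln (g \<xi>))" unfolding glng using gh i5 by simp
  have v6: "integral\<^sup>L N (\<lambda>\<xi>. g \<xi> * ln (g \<xi>)) = - (1 / lam) * integral\<^sup>L N (\<lambda>\<xi>. g \<xi> * h \<xi>) - ln Z"
    unfolding glng using gh i5 g1 by simp
  have ih: "integrable mu h" unfolding mu_def' using gh gpos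
    by (subst integrable_density) (auto simp: less_imp_le)
  have vh: "integral\<^sup>L mu h = integral\<^sup>L N (\<lambda>\<xi>. g \<xi> * h \<xi>)" unfolding mu_def' using gpos
    by (subst integral_density) (auto simp: less_imp_le)
  show "ext_int mu h + ereal lam * KL_div mu N = ereal (- lam * ln Z)"
    unfolding KLeq ext_int_def using ih i6 vh v6 lam by (simp add: field_simps)
qed



lemma Phi_prob: "prob_space (Phi x)"
  unfolding Phi_def by (rule prob_space_normal_density) simp

lemma sets_Phi[simp, measurable_cong]: "sets (Phi x) = sets borel"
  unfolding Phi_def by simp

lemma space_Phi[simp]: "space (Phi x) = UNIV"
  unfolding Phi_def by simp

lemma Phi_shift: "Phi x = distr (Phi 0) borel (\<lambda>z. -x + z)"
proof -
  have "Phi x = density (distr lborel borel ((+) (-x))) (normal_density (-x) 1)"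
    unfolding Phi_def lborel_distr_plus ..
  also have "\<dots> = distr (density lborel (\<lambda>z. normal_density (-x) 1 (-x + z))) borel ((+) (-x))"
    by (rule density_distr) auto
  also have "(\<lambda>z. normal_density (-x) 1 (-x + z)) = normal_density 0 1"
    by (auto simp: normal_density_def)
  finally show ?thesis unfolding Phi_def by simp
qed

lemma Phi_int_shift:
  fixes F :: "real \<Rightarrow> real"
  assumes [measurable]: "F \<in> borel_measurable borel"
  shows "integral\<^sup>L (Phi x) (\<lambda>\<zeta>. F (x + \<zeta>)) = integral\<^sup>L (Phi 0) F"
    "integrable (Phi x) (\<lambda>\<zeta>. F (x + \<zeta>)) \<longleftrightarrow> integrable (Phi 0) F"
proof -
  show "integral\<^sup>L (Phi x) (\<lambda>\<zeta>. F (x + \<zeta>)) = integral\<^sup>L (Phi 0) F"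
    by (subst Phi_shift, subst integral_distr) auto
  show "integrable (Phi x) (\<lambda>\<zeta>. F (x + \<zeta>)) \<longleftrightarrow> integrable (Phi 0) F"
    by (subst Phi_shift, subst integrable_distr_eq) auto
qed

lemma nd_eq: "normal_density 0 1 z * exp (3 * z\<^sup>2 / 8) = 2 * normal_density 0 2 z"
proof -
  have s8: "sqrt (8::real) = 2 * sqrt 2" using real_sqrt_mult[of 4 2] by simp
  show ?thesis
  unfolding normal_density_def
  by (simp add: exp_add[symmetric] real_sqrt_mult s8)
qed

lemma int_exp_sq: "integrable (Phi 0) (\<lambda>z. exp (3 * z\<^sup>2 / 8))"
  unfolding Phi_def
  by (subst integrable_density) (auto simp: nd_eq normal_density_nonneg intro: integrable_normal_density)

lemma int_exp_abs:
  assumes "b \<ge> 0"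
  shows "integrable (Phi 0) (\<lambda>z. exp (- b * \<bar>z\<bar>))" "integral\<^sup>L (Phi 0) (\<lambda>z. exp (- b * \<bar>z\<bar>)) > 0"
proof -
  interpret prob_space "Phi 0" by (rule Phi_prob)
  show i: "integrable (Phi 0) (\<lambda>z. exp (- b * \<bar>z\<bar>))"
    by (rule integrable_const_bound[where B=1]) (use assms in \<open>auto simp: mult_nonneg_nonneg\<close>)
  have "integral\<^sup>L (Phi 0) (\<lambda>z. exp (- b * \<bar>z\<bar>)) \<noteq> 0"
  proof
    assume "integral\<^sup>L (Phi 0) (\<lambda>z. exp (- b * \<bar>z\<bar>)) = 0"
    then have "AE x in Phi 0. exp (- b * \<bar>x\<bar>) = 0"
      using integral_nonneg_eq_0_iff_AE[OF i] by simp
    then show False by simp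
  qed
  moreover have "integral\<^sup>L (Phi 0) (\<lambda>z. exp (- b * \<bar>z\<bar>)) \<ge> 0" by simp
  ultimately show "integral\<^sup>L (Phi 0) (\<lambda>z. exp (- b * \<bar>z\<bar>)) > 0" by linarith
qed



locale setting =
  fixes l :: "real \<Rightarrow> real" and K Ll lam :: real and \<phi> :: "real \<Rightarrow> real" and Lp m :: real
  assumes l_ge: "\<forall>x. K \<le> l x" and l_lip: "Ll-lipschitz_on UNIV l"
    and lam_pos: "lam > 0" and phi_lip: "Lp-lipschitz_on UNIV \<phi>" and phi_ge: "\<forall>y. m \<le> \<phi> y"
begin

lemma phi_meas[measurable]: "\<phi> \<in> borel_measurable borel"
  by (rule borel_measurable_continuous_onI, rule lipschitz_on_continuous_on[OF phi_lip])

lemma l_meas[measurable]: "l \<in> borel_measurable borel"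
  by (rule borel_measurable_continuous_onI, rule lipschitz_on_continuous_on[OF l_lip])

lemma Ll_nonneg: "Ll \<ge> 0" using lipschitz_on_nonneg[OF l_lip] .
lemma Lp_nonneg: "Lp \<ge> 0" using lipschitz_on_nonneg[OF phi_lip] .

lemma l_lipD: "\<bar>l a - l b\<bar> \<le> Ll * \<bar>a - b\<bar>"
  using lipschitz_onD[OF l_lip, of a b] by (simp add: dist_real_def)

lemma phi_lipD: "\<bar>\<phi> a - \<phi> b\<bar> \<le> Lp * \<bar>a - b\<bar>"
  using lipschitz_onD[OF phi_lip, of a b] by (simp add: dist_real_def)

definition Z :: "real \<Rightarrow> real" where
  "Z x = integral\<^sup>L (Phi x) (\<lambda>\<zeta>. exp (- (\<phi> (x + \<zeta>) + l \<zeta>) / lam))"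

lemma h_ge: "\<forall>\<xi>. m + K \<le> \<phi> (x + \<xi>) + l \<xi>"
  using l_ge phi_ge by (simp add: add_mono)

lemma hm: "(\<lambda>\<xi>. \<phi> (x + \<xi>) + l \<xi>) \<in> borel_measurable (Phi x)"
  by simp

lemma Zpos: "Z x > 0"
  using gibbs_opt(1)[OF Phi_prob[of x] hm h_ge[of x] lam_pos] unfolding Z_def by simp

lemma Zint: "integrable (Phi x) (\<lambda>\<zeta>. exp (- (\<phi> (x + \<zeta>) + l \<zeta>) / lam))"
  using gibbs_opt(2)[OF Phi_prob[of x] hm h_ge[of x] lam_pos] by simp

lemma mu_opt_props:
  "mu_opt l lam \<phi> x \<in> admissible x"
  "objective l lam \<phi> x (mu_opt l lam \<phi> x) = ereal (- lam * ln (Z x))"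
  "Mop l lam \<phi> x = ereal (- lam * ln (Z x))"
proof -
  have eq: "mu_opt l lam \<phi> x = density (Phi x)
     (\<lambda>\<xi>. ennreal (exp (- (\<phi> (x + \<xi>) + l \<xi>) / lam) / integral\<^sup>L (Phi x) (\<lambda>\<xi>. exp (- (\<phi> (x + \<xi>) + l \<xi>) / lam))))"
    unfolding mu_opt_def gibbs_weight_def ..
  note G = gibbs_opt[OF Phi_prob[of x] hm h_ge[of x] lam_pos, folded eq]
  show A: "mu_opt l lam \<phi> x \<in> admissible x"
    unfolding admissible_def using G by simp
  show O: "objective l lam \<phi> x (mu_opt l lam \<phi> x) = ereal (- lam * ln (Z x))"
    unfolding objective_def Z_def using G by simp
  show "Mop l lam \<phi> x = ereal (- lam * ln (Z x))"
    unfolding Mop_def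
  proof (rule antisym)
    show "(INF mu\<in>admissible x. objective l lam \<phi> x mu) \<le> ereal (- lam * ln (Z x))"
      using A O by (metis INF_lower)
    show "ereal (- lam * ln (Z x)) \<le> (INF mu\<in>admissible x. objective l lam \<phi> x mu)"
    proof (rule INF_greatest)
      fix mu assume "mu \<in> admissible x"
      then show "ereal (- lam * ln (Z x)) \<le> objective l lam \<phi> x mu"
        unfolding admissible_def objective_def Z_def
        using gibbs_lower[OF Phi_prob[of x] _ _ _ hm h_ge[of x] lam_pos, of mu] by auto
    qed
  qed
qed

lemma Z_shift: "Z x = integral\<^sup>L (Phi 0) (\<lambda>z. exp (- (\<phi> z + l (z - x)) / lam))"
  using Phi_int_shift(1)[of "\<lambda>z. exp (- (\<phi> z + l (z - x)) / lam)" x] unfolding Z_def by simp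

lemma F_int: "integrable (Phi 0) (\<lambda>z. exp (- (\<phi> z + l (z - x)) / lam))"
  using Phi_int_shift(2)[of "\<lambda>z. exp (- (\<phi> z + l (z - x)) / lam)" x] Zint[of x] by simp

lemma Z_ratio: "Z y \<le> Z x * exp (Ll * \<bar>x - y\<bar> / lam)"
proof -
  have "Z y \<le> integral\<^sup>L (Phi 0) (\<lambda>z. exp (- (\<phi> z + l (z - x)) / lam) * exp (Ll * \<bar>x - y\<bar> / lam))"
    unfolding Z_shift
  proof (rule integral_mono)
    fix z
    have "\<bar>l (z - x) - l (z - y)\<bar> \<le> Ll * \<bar>x - y\<bar>" using l_lipD[of "z - x" "z - y"] by (simp add: abs_minus_commute)
    then have "- (\<phi> z + l (z - y)) / lam \<le> (- (\<phi> z + l (z - x)) + Ll * \<bar>x - y\<bar>) / lam"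
      using lam_pos by (intro divide_right_mono) (auto simp: abs_le_iff)
    then have "exp (- (\<phi> z + l (z - y)) / lam) \<le> exp ((- (\<phi> z + l (z - x)) + Ll * \<bar>x - y\<bar>) / lam)"
      by simp
    also have "\<dots> = exp (- (\<phi> z + l (z - x)) / lam) * exp (Ll * \<bar>x - y\<bar> / lam)"
      by (simp add: add_divide_distrib exp_add)
    finally show "exp (- (\<phi> z + l (z - y)) / lam) \<le> exp (- (\<phi> z + l (z - x)) / lam) * exp (Ll * \<bar>x - y\<bar> / lam)" .
  qed (use F_int[of x] F_int[of y] in auto)
  also have "\<dots> = Z x * exp (Ll * \<bar>x - y\<bar> / lam)" unfolding Z_shift by simp
  finally show ?thesis .
qed

lemma M_lip: "Ll-lipschitz_on UNIV (\<lambda>x. - lam * ln (Z x))"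
proof (rule lipschitz_onI)
  fix x y :: real
  have a: "ln (Z y) \<le> ln (Z x) + Ll * \<bar>x - y\<bar> / lam" for x y
  proof -
    have "ln (Z y) \<le> ln (Z x * exp (Ll * \<bar>x - y\<bar> / lam))"
      using Z_ratio[of y x] Zpos[of y] Zpos[of x] by (subst ln_le_cancel_iff) auto
    also have "\<dots> = ln (Z x) + Ll * \<bar>x - y\<bar> / lam" using Zpos[of x] by (simp add: ln_mult)
    finally show ?thesis .
  qed
  have b: "lam * ln (Z y) \<le> lam * ln (Z x) + Ll * \<bar>x - y\<bar>" for x y
  proof -
    have "lam * ln (Z y) \<le> lam * (ln (Z x) + Ll * \<bar>x - y\<bar> / lam)"
      by (rule mult_left_mono[OF a]) (use lam_pos in simp)
    also have "\<dots> = lam * ln (Z x) + Ll * \<bar>x - y\<bar>" using lam_pos by (simp add: field_simps)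
    finally show ?thesis .
  qed
  have "lam * ln (Z y) \<le> lam * ln (Z x) + Ll * \<bar>x - y\<bar>" by (rule b)
  moreover have "lam * ln (Z x) \<le> lam * ln (Z y) + Ll * \<bar>x - y\<bar>"
    using b[where x=y and y=x] by (simp add: abs_minus_commute)
  ultimately show "dist (- lam * ln (Z x)) (- lam * ln (Z y)) \<le> Ll * dist x y"
    by (simp add: dist_real_def abs_le_iff)
qed (rule Ll_nonneg)

lemma mu_opt_measure:
  assumes A[measurable]: "A \<in> sets borel"
  shows "measure (mu_opt l lam \<phi> x) A
     = integral\<^sup>L (Phi x) (\<lambda>\<xi>. exp (- (\<phi> (x + \<xi>) + l \<xi>) / lam) * indicator A \<xi>) / Z x"
proof -
  have eq: "mu_opt l lam \<phi> x = density (Phi x) (\<lambda>\<xi>. ennreal (exp (- (\<phi> (x + \<xi>) + l \<xi>) / lam) / Z x))"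
    unfolding mu_opt_def gibbs_weight_def Z_def ..
  have "measure (mu_opt l lam \<phi> x) A = integral\<^sup>L (mu_opt l lam \<phi> x) (indicator A)"
    by (simp add: eq)
  also have "\<dots> = integral\<^sup>L (Phi x) (\<lambda>\<xi>. exp (- (\<phi> (x + \<xi>) + l \<xi>) / lam) / Z x * indicator A \<xi>)"
    unfolding eq using Zpos[of x] by (subst integral_density) auto
  also have "\<dots> = integral\<^sup>L (Phi x) (\<lambda>\<xi>. exp (- (\<phi> (x + \<xi>) + l \<xi>) / lam) * indicator A \<xi>) / Z x"
    by simp
  finally show ?thesis .
qed

lemma tail: "\<exists>\<kappa>1>0. \<forall>x t. t \<ge> 0 \<longrightarrow> measure (mu_opt l lam \<phi> x) {\<xi>. \<bar>x + \<xi>\<bar> > t} \<le> 2 * \<kappa>1 * exp (- (1/8) * t\<^sup>2)"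
proof -
  define a where "a = Ll / lam"
  define b where "b = (Lp + Ll) / lam"
  have b0: "b \<ge> 0" unfolding b_def using Lp_nonneg Ll_nonneg lam_pos by simp
  define C0 where "C0 = integral\<^sup>L (Phi 0) (\<lambda>z. exp (- b * \<bar>z\<bar>))"
  define C2 where "C2 = integral\<^sup>L (Phi 0) (\<lambda>z. exp (3 * z\<^sup>2 / 8))"
  have C0: "C0 > 0" unfolding C0_def using int_exp_abs[OF b0] by simp
  have C2: "C2 \<ge> 0" unfolding C2_def by simp
  define k where "k = exp ((\<phi> 0 - m) / lam) * exp (a\<^sup>2) * C2 / (2 * C0)"
  have k: "k \<ge> 0" unfolding k_def using C0 C2 by simp
  have main: "measure (mu_opt l lam \<phi> x) {\<xi>. \<bar>x + \<xi>\<bar> > t} \<le> 2 * k * exp (- (1/8) * t\<^sup>2)"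
    if t: "t \<ge> 0" for x t
  proof -
    define w where "w \<xi> = exp (- (\<phi> (x + \<xi>) + l \<xi>) / lam)" for \<xi>
    define A where "A = {\<xi>. \<bar>x + \<xi>\<bar> > t}"
    have Am[measurable]: "A \<in> sets borel" unfolding A_def by measurable
    define E1 where "E1 = exp (- (m + l (-x)) / lam)"
    define E2 where "E2 = exp (- (\<phi> 0 + l (-x)) / lam)"
    have wm[measurable]: "w \<in> borel_measurable borel" unfolding w_def by measurable
    have upper: "w \<xi> * indicator A \<xi> \<le> E1 * exp (a\<^sup>2) * exp (- (1/8) * t\<^sup>2) * exp (3 * (x + \<xi>)\<^sup>2 / 8)" for \<xi>
    proof (cases "\<xi> \<in> A")
      case False then show ?thesis unfolding E1_def by simp
    next
      case True
      define z where "z = x + \<xi>"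
      have zt: "\<bar>z\<bar> > t" using True unfolding A_def z_def by simp
      have "l (-x) - l \<xi> \<le> Ll * \<bar>z\<bar>" using l_lipD[of \<xi> "-x"] unfolding z_def by (auto simp: abs_le_iff algebra_simps)
      then have "- (\<phi> (x + \<xi>) + l \<xi>) \<le> - (m + l (-x)) + Ll * \<bar>z\<bar>" using phi_ge by (smt (verit))
      then have e1: "- (\<phi> (x + \<xi>) + l \<xi>) / lam \<le> - (m + l (-x)) / lam + a * \<bar>z\<bar>"
        unfolding a_def using lam_pos by (simp add: divide_right_mono add_divide_distrib[symmetric])
      have "0 \<le> (\<bar>z\<bar> / 2 - a)\<^sup>2" by simp
      then have e2: "a * \<bar>z\<bar> \<le> a\<^sup>2 + z\<^sup>2 / 4" by (simp add: power2_eq_square field_simps)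
      have "t\<^sup>2 \<le> z\<^sup>2" using zt t by (metis abs_ge_zero le_less_trans less_imp_le power2_abs power_mono)
      then have "w \<xi> \<le> exp (- (m + l (-x)) / lam + a\<^sup>2 + (- (1/8) * t\<^sup>2) + 3 * z\<^sup>2 / 8)"
        unfolding w_def using e1 e2 by simp
      also have "exp (- (m + l (-x)) / lam + a\<^sup>2 + (- (1/8) * t\<^sup>2) + 3 * z\<^sup>2 / 8)
         = exp (- (m + l (-x)) / lam) * exp (a\<^sup>2) * exp (- (1/8) * t\<^sup>2) * exp (3 * z\<^sup>2 / 8)"
        by (simp only: exp_add)
      finally show ?thesis using True unfolding E1_def z_def by simp
    qed
    have lower: "E2 * exp (- b * \<bar>x + \<xi>\<bar>) \<le> w \<xi>" for \<xi>
    proof -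
      define z where "z = x + \<xi>"
      have "l \<xi> - l (-x) \<le> Ll * \<bar>z\<bar>" using l_lipD[of \<xi> "-x"] unfolding z_def by (auto simp: abs_le_iff algebra_simps)
      moreover have "\<phi> z - \<phi> 0 \<le> Lp * \<bar>z\<bar>" using phi_lipD[of z 0] by simp
      ultimately have "- (\<phi> 0 + l (-x)) - (Lp + Ll) * \<bar>z\<bar> \<le> - (\<phi> (x + \<xi>) + l \<xi>)"
        unfolding z_def by (simp add: algebra_simps)
      then have "- (\<phi> 0 + l (-x)) / lam - b * \<bar>z\<bar> \<le> - (\<phi> (x + \<xi>) + l \<xi>) / lam"
        unfolding b_def using lam_pos by (simp add: divide_right_mono diff_divide_distrib[symmetric])
      then show ?thesis unfolding E2_def w_def z_def by (simp add: exp_add[symmetric])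
    qed
    have iw: "integrable (Phi x) w" using Zint[of x] unfolding w_def .
    have Zx: "Z x = integral\<^sup>L (Phi x) w" unfolding Z_def w_def ..
    have i1: "integrable (Phi x) (\<lambda>\<xi>. exp (3 * (x + \<xi>)\<^sup>2 / 8))"
      using Phi_int_shift(2)[of "\<lambda>z. exp (3 * z\<^sup>2 / 8)" x] int_exp_sq by simp
    have v1: "integral\<^sup>L (Phi x) (\<lambda>\<xi>. exp (3 * (x + \<xi>)\<^sup>2 / 8)) = C2"
      using Phi_int_shift(1)[of "\<lambda>z. exp (3 * z\<^sup>2 / 8)" x] unfolding C2_def by simp
    have i2: "integrable (Phi x) (\<lambda>\<xi>. exp (- b * \<bar>x + \<xi>\<bar>))"
      using Phi_int_shift(2)[of "\<lambda>z. exp (- b * \<bar>z\<bar>)" x] int_exp_abs[OF b0] by simp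
    have v2: "integral\<^sup>L (Phi x) (\<lambda>\<xi>. exp (- b * \<bar>x + \<xi>\<bar>)) = C0"
      using Phi_int_shift(1)[of "\<lambda>z. exp (- b * \<bar>z\<bar>)" x] unfolding C0_def by simp
    have N: "integral\<^sup>L (Phi x) (\<lambda>\<xi>. w \<xi> * indicator A \<xi>) \<le> E1 * exp (a\<^sup>2) * exp (- (1/8) * t\<^sup>2) * C2"
    proof -
      have "integral\<^sup>L (Phi x) (\<lambda>\<xi>. w \<xi> * indicator A \<xi>)
          \<le> integral\<^sup>L (Phi x) (\<lambda>\<xi>. E1 * exp (a\<^sup>2) * exp (- (1/8) * t\<^sup>2) * exp (3 * (x + \<xi>)\<^sup>2 / 8))"
      proof (rule integral_mono)
        show "integrable (Phi x) (\<lambda>\<xi>. w \<xi> * indicator A \<xi>)"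
          using iw by (intro integrable_real_mult_indicator) simp_all
      qed (use i1 upper in auto)
      also have "\<dots> = E1 * exp (a\<^sup>2) * exp (- (1/8) * t\<^sup>2) * C2" using v1 by simp
      finally show ?thesis .
    qed
    have D: "E2 * C0 \<le> Z x"
    proof -
      have "E2 * C0 = integral\<^sup>L (Phi x) (\<lambda>\<xi>. E2 * exp (- b * \<bar>x + \<xi>\<bar>))" using v2 by simp
      also have "\<dots> \<le> Z x" unfolding Zx by (rule integral_mono) (use i2 iw lower in auto)
      finally show ?thesis .
    qed
    have "measure (mu_opt l lam \<phi> x) A = integral\<^sup>L (Phi x) (\<lambda>\<xi>. w \<xi> * indicator A \<xi>) / Z x"
      unfolding w_def by (rule mu_opt_measure) simp
    also have "\<dots> \<le> (E1 * exp (a\<^sup>2) * exp (- (1/8) * t\<^sup>2) * C2) / (E2 * C0)"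
      by (rule frac_le) (use N D C0 C2 in \<open>auto simp: E1_def E2_def\<close>)
    also have "\<dots> = 2 * k * exp (- (1/8) * t\<^sup>2)"
    proof -
      have "E1 / E2 = exp ((\<phi> 0 - m) / lam)" unfolding E1_def E2_def
        by (simp add: exp_diff[symmetric] add_divide_distrib[symmetric] diff_divide_distrib[symmetric])
      then have "E1 = exp ((\<phi> 0 - m) / lam) * E2" unfolding E2_def by (simp add: field_simps)
      then show ?thesis unfolding k_def using C0 by (simp add: field_simps E2_def)
    qed
    finally show ?thesis unfolding A_def .
  qed
  show ?thesis
  proof (intro exI[where x="k + 1"] conjI allI impI)
    fix x t :: real assume t: "t \<ge> 0"
    have "2 * k * exp (- (1/8) * t\<^sup>2) \<le> 2 * (k + 1) * exp (- (1/8) * t\<^sup>2)"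
      by (intro mult_right_mono) auto
    then show "measure (mu_opt l lam \<phi> x) {\<xi>. \<bar>x + \<xi>\<bar> > t} \<le> 2 * (k + 1) * exp (- (1/8) * t\<^sup>2)"
      using main[OF t, of x] by linarith
  qed (use k in simp)
qed

end



lemma compare_step:
  assumes Si: "setting l K Ll lam \<phi>i Li mi" and Sj: "setting l K Ll lam \<phi>j Lj mj"
    and DR: "\<forall>y\<in>{-R..R}. \<bar>\<phi>i y - \<phi>j y\<bar> \<le> D"
    and tl: "measure (mu_opt l lam \<phi>j x) {\<xi>. \<bar>x + \<xi>\<bar> > R} \<le> d" and d: "d \<le> 1/2"
  shows "real_of_ereal (Mop l lam \<phi>i x) \<le> D + real_of_ereal (Mop l lam \<phi>j x) + 2 * lam * d"
proof -
  interpret I: setting l K Ll lam \<phi>i Li mi by fact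
  interpret J: setting l K Ll lam \<phi>j Lj mj by fact
  have d0: "d \<ge> 0" using tl order_trans[OF measure_nonneg] by blast
  define A where "A = {\<xi>. \<bar>x + \<xi>\<bar> > R}"
  have Am[measurable]: "A \<in> sets borel" unfolding A_def by measurable
  define wi where "wi \<xi> = exp (- (\<phi>i (x + \<xi>) + l \<xi>) / lam)" for \<xi>
  define wj where "wj \<xi> = exp (- (\<phi>j (x + \<xi>) + l \<xi>) / lam)" for \<xi>
  have iwi: "integrable (Phi x) wi" using I.Zint[of x] unfolding wi_def .
  have iwj: "integrable (Phi x) wj" using J.Zint[of x] unfolding wj_def .
  have Zi: "I.Z x = integral\<^sup>L (Phi x) wi" unfolding I.Z_def wi_def ..
  have Zj: "J.Z x = integral\<^sup>L (Phi x) wj" unfolding J.Z_def wj_def ..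
  have iwjA: "integrable (Phi x) (\<lambda>\<xi>. wj \<xi> * indicator A \<xi>)"
    using iwj by (intro integrable_real_mult_indicator) simp_all
  have mA: "integral\<^sup>L (Phi x) (\<lambda>\<xi>. wj \<xi> * indicator A \<xi>) = J.Z x * measure (mu_opt l lam \<phi>j x) A"
    using J.mu_opt_measure[OF Am, of x] J.Zpos[of x] unfolding wj_def by simp
  have pw: "exp (- D / lam) * (wj \<xi> - wj \<xi> * indicator A \<xi>) \<le> wi \<xi>" for \<xi>
  proof (cases "\<xi> \<in> A")
    case True then show ?thesis unfolding wi_def by simp
  next
    case False
    then have "x + \<xi> \<in> {-R..R}" unfolding A_def by auto
    then have "\<phi>i (x + \<xi>) \<le> \<phi>j (x + \<xi>) + D" using DR by fastforce
    then have "(- D + - (\<phi>j (x + \<xi>) + l \<xi>)) / lam \<le> - (\<phi>i (x + \<xi>) + l \<xi>) / lam"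
      using I.lam_pos by (intro divide_right_mono) auto
    then have "- D / lam + - (\<phi>j (x + \<xi>) + l \<xi>) / lam \<le> - (\<phi>i (x + \<xi>) + l \<xi>) / lam"
      by (simp only: add_divide_distrib)
    then have "exp (- D / lam + - (\<phi>j (x + \<xi>) + l \<xi>) / lam) \<le> wi \<xi>" unfolding wi_def by simp
    then have "exp (- D / lam) * wj \<xi> \<le> wi \<xi>" unfolding wj_def by (simp only: exp_add)
    then show ?thesis using False by simp
  qed
  have "exp (- D / lam) * (J.Z x - J.Z x * measure (mu_opt l lam \<phi>j x) A)
      = integral\<^sup>L (Phi x) (\<lambda>\<xi>. exp (- D / lam) * (wj \<xi> - wj \<xi> * indicator A \<xi>))"
    using iwj iwjA mA Zj by simp
  also have "\<dots> \<le> I.Z x" unfolding Zi by (rule integral_mono) (use iwj iwjA iwi pw in auto)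
  finally have Z1: "exp (- D / lam) * (J.Z x * (1 - measure (mu_opt l lam \<phi>j x) A)) \<le> I.Z x"
    by (simp add: algebra_simps)
  have "exp (- D / lam) * (J.Z x * (1 - d)) \<le> exp (- D / lam) * (J.Z x * (1 - measure (mu_opt l lam \<phi>j x) A))"
    using tl J.Zpos[of x] unfolding A_def by (intro mult_left_mono) auto
  with Z1 have Z2: "exp (- D / lam) * (J.Z x * (1 - d)) \<le> I.Z x" by linarith
  have pos: "exp (- D / lam) * (J.Z x * (1 - d)) > 0" using J.Zpos[of x] d by simp
  have "ln (exp (- D / lam) * (J.Z x * (1 - d))) \<le> ln (I.Z x)"
    using Z2 pos by simp
  moreover have "ln (exp (- D / lam) * (J.Z x * (1 - d))) = - D / lam + ln (J.Z x) + ln (1 - d)"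
    using J.Zpos[of x] d by (simp add: ln_mult)
  moreover have "ln (1 - d) \<ge> - 2 * d"
  proof -
    have a: "- d - 2 * d\<^sup>2 \<le> ln (1 - d)" using ln_one_minus_pos_lower_bound[of d] d d0 by simp
    have "d * d \<le> d * (1/2)" using d d0 by (intro mult_left_mono) auto
    then show ?thesis using a by (simp add: power2_eq_square)
  qed
  ultimately have "- D / lam + ln (J.Z x) - 2 * d \<le> ln (I.Z x)" by linarith
  then have "lam * (- D / lam + ln (J.Z x) - 2 * d) \<le> lam * ln (I.Z x)"
    using I.lam_pos by (intro mult_left_mono) auto
  moreover have "lam * (- D / lam + ln (J.Z x) - 2 * d) = - D + lam * ln (J.Z x) - 2 * lam * d"
    using I.lam_pos by (simp add: algebra_simps)
  ultimately have "- lam * ln (I.Z x) \<le> D + (- lam * ln (J.Z x)) + 2 * lam * d"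
    by linarith
  then show ?thesis using I.mu_opt_props(3)[of x] J.mu_opt_props(3)[of x] by simp
qed

lemma part4:
  assumes S1: "setting l K Ll lam \<phi>1 L1 m1" and S2: "setting l K Ll lam \<phi>2 L2 m2"
  shows "\<exists>E :: real \<Rightarrow> real. (\<forall>R>0. E R > 0) \<and> (E \<longlongrightarrow> 0) at_top \<and>
         (\<forall>R>0. \<forall>x. \<bar>real_of_ereal (Mop l lam \<phi>1 x) - real_of_ereal (Mop l lam \<phi>2 x)\<bar>
                    \<le> (SUP y\<in>{-R..R}. \<bar>\<phi>1 y - \<phi>2 y\<bar>) + E R)"
proof -
  interpret S1: setting l K Ll lam \<phi>1 L1 m1 by fact
  interpret S2: setting l K Ll lam \<phi>2 L2 m2 by fact
  obtain ka where ka: "ka > 0" "\<forall>x t. t \<ge> 0 \<longrightarrow> measure (mu_opt l lam \<phi>1 x) {\<xi>. \<bar>x + \<xi>\<bar> > t} \<le> 2 * ka * exp (- (1/8) * t\<^sup>2)"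
    using S1.tail by blast
  obtain kb where kb: "kb > 0" "\<forall>x t. t \<ge> 0 \<longrightarrow> measure (mu_opt l lam \<phi>2 x) {\<xi>. \<bar>x + \<xi>\<bar> > t} \<le> 2 * kb * exp (- (1/8) * t\<^sup>2)"
    using S2.tail by blast
  define k where "k = max ka kb"
  have k: "k > 0" unfolding k_def using ka by simp
  define \<delta> where "\<delta> R = 2 * k * exp (- (1/8) * R\<^sup>2)" for R
  have \<delta>pos: "\<delta> R > 0" for R unfolding \<delta>_def using k by simp
  have tl1: "measure (mu_opt l lam \<phi>1 x) {\<xi>. \<bar>x + \<xi>\<bar> > R} \<le> \<delta> R" if "R \<ge> 0" for x R
  proof -
    have "2 * ka * exp (- (1/8) * R\<^sup>2) \<le> \<delta> R" unfolding \<delta>_def k_def by (intro mult_right_mono) auto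
    then show ?thesis using ka(2) that by (meson order_trans)
  qed
  have tl2: "measure (mu_opt l lam \<phi>2 x) {\<xi>. \<bar>x + \<xi>\<bar> > R} \<le> \<delta> R" if "R \<ge> 0" for x R
  proof -
    have "2 * kb * exp (- (1/8) * R\<^sup>2) \<le> \<delta> R" unfolding \<delta>_def k_def by (intro mult_right_mono) auto
    then show ?thesis using kb(2) that by (meson order_trans)
  qed
  define D where "D R = (SUP y\<in>{-R..R}. \<bar>\<phi>1 y - \<phi>2 y\<bar>)" for R
  have bdd: "bdd_above ((\<lambda>y. \<bar>\<phi>1 y - \<phi>2 y\<bar>) ` {-R..R})" for R
  proof (rule bdd_aboveI2)
    fix y assume y: "y \<in> {-R..R}"
    have "\<bar>\<phi>1 y - \<phi>1 0\<bar> \<le> L1 * \<bar>y\<bar>" using S1.phi_lipD[of y 0] by simp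
    moreover have "\<bar>\<phi>2 y - \<phi>2 0\<bar> \<le> L2 * \<bar>y\<bar>" using S2.phi_lipD[of y 0] by simp
    moreover have "L1 * \<bar>y\<bar> \<le> L1 * \<bar>R\<bar>" using y S1.Lp_nonneg by (intro mult_left_mono) auto
    moreover have "L2 * \<bar>y\<bar> \<le> L2 * \<bar>R\<bar>" using y S2.Lp_nonneg by (intro mult_left_mono) auto
    ultimately show "\<bar>\<phi>1 y - \<phi>2 y\<bar> \<le> \<bar>\<phi>1 0\<bar> + \<bar>\<phi>2 0\<bar> + L1 * \<bar>R\<bar> + L2 * \<bar>R\<bar>"
      by (simp add: abs_le_iff) linarith
  qed
  have DR: "\<forall>y\<in>{-R..R}. \<bar>\<phi>1 y - \<phi>2 y\<bar> \<le> D R" for R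
    unfolding D_def using bdd[of R] by (auto intro: cSUP_upper)
  have DR': "\<forall>y\<in>{-R..R}. \<bar>\<phi>2 y - \<phi>1 y\<bar> \<le> D R" for R
    using DR[of R] by (simp add: abs_minus_commute)
  have D0: "D R \<ge> 0" if "R \<ge> 0" for R
    using DR[of R] that by (meson abs_ge_zero atLeastAtMost_iff neg_le_0_iff_le order_trans)
  define R0 where "R0 = 32 * k + 1"
  have R01: "R0 \<ge> 1" unfolding R0_def using k by simp
  have dsmall: "\<delta> R \<le> 1/2" if R: "R \<ge> R0" for R
  proof -
    have "R * R \<ge> 1 * R" using R R01 by (intro mult_right_mono) auto
    then have "R\<^sup>2 \<ge> 32 * k" using R unfolding R0_def by (simp add: power2_eq_square)
    moreover have "exp (R\<^sup>2 / 8) \<ge> 1 + R\<^sup>2 / 8" by (rule exp_ge_add_one_self)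
    ultimately have e: "exp (R\<^sup>2 / 8) \<ge> 4 * k" by linarith
    have "\<delta> R = 2 * k / exp (R\<^sup>2 / 8)" unfolding \<delta>_def by (simp add: exp_minus field_simps)
    also have "\<dots> \<le> 2 * k / (4 * k)" using e k by (intro divide_left_mono) auto
    also have "\<dots> = 1/2" using k by simp
    finally show ?thesis .
  qed
  have key: "\<bar>real_of_ereal (Mop l lam \<phi>1 x) - real_of_ereal (Mop l lam \<phi>2 x)\<bar> \<le> D R + 2 * lam * \<delta> R"
    if R: "R \<ge> R0" for R x
  proof -
    have R0': "R \<ge> 0" using R R01 by simp
    have a: "real_of_ereal (Mop l lam \<phi>1 x) \<le> D R + real_of_ereal (Mop l lam \<phi>2 x) + 2 * lam * \<delta> R"
      by (rule compare_step[OF S1 S2 DR tl2[OF R0'] dsmall[OF R]])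
    have b: "real_of_ereal (Mop l lam \<phi>2 x) \<le> D R + real_of_ereal (Mop l lam \<phi>1 x) + 2 * lam * \<delta> R"
      by (rule compare_step[OF S2 S1 DR' tl1[OF R0'] dsmall[OF R]])
    show ?thesis using a b by (simp add: abs_le_iff)
  qed
  define E where "E R = (if R \<ge> R0 then 2 * lam * \<delta> R else D R0 + 2 * lam * \<delta> R0)" for R
  show ?thesis
  proof (intro exI[of _ E] conjI allI impI)
    fix R :: real assume "R > 0"
    have "2 * lam * \<delta> R > 0" "2 * lam * \<delta> R0 > 0" using \<delta>pos S1.lam_pos by auto
    then show "E R > 0" unfolding E_def using D0[of R0] R01 by auto
  next
    have "((\<lambda>R. 2 * lam * (2 * k * exp (- (1/8) * R\<^sup>2))) \<longlongrightarrow> 0) at_top"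
    proof -
      have "((\<lambda>R::real. exp (- (1/8) * R\<^sup>2)) \<longlongrightarrow> 0) at_top" by real_asymp
      then show ?thesis by (intro tendsto_mult_right_zero)
    qed
    moreover have "eventually (\<lambda>R. 2 * lam * (2 * k * exp (- (1/8) * R\<^sup>2)) = E R) at_top"
      unfolding E_def \<delta>_def eventually_at_top_linorder by (intro exI[of _ R0]) auto
    ultimately show "(E \<longlongrightarrow> 0) at_top" by (rule Lim_transform_eventually)
  next
    fix R x :: real assume R: "R > 0"
    show "\<bar>real_of_ereal (Mop l lam \<phi>1 x) - real_of_ereal (Mop l lam \<phi>2 x)\<bar> \<le> (SUP y\<in>{-R..R}. \<bar>\<phi>1 y - \<phi>2 y\<bar>) + E R"
    proof (cases "R \<ge> R0")
      case True then show ?thesis using key[OF True, of x] unfolding E_def D_def by simp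
    next
      case False then show ?thesis using key[of R0 x] D0[of R] R unfolding E_def D_def by simp
    qed
  qed
qed

theorem lemma3p2:
  fixes l :: "real \<Rightarrow> real" and K Ll lam :: real and \<phi> \<phi>1 \<phi>2 :: "real \<Rightarrow> real"
  assumes K_pos: "K > 0"
    and l_ge: "\<forall>x. K \<le> l x" and l_0: "l 0 = K"
    and l_sub: "\<forall>x y. l x + l y \<ge> l (x + y) + K"
    and l_coercive: "filterlim l at_top at_infinity"
    and Ll_pos: "Ll > 0" and l_lip: "Ll-lipschitz_on UNIV l"
    and lam_pos: "lam > 0"
    and phi_lip: "\<exists>L. L-lipschitz_on UNIV \<phi>" and phi_bdd: "bdd_below (range \<phi>)"
    and phi1_lip: "\<exists>L. L-lipschitz_on UNIV \<phi>1" and phi1_bdd: "bdd_below (range \<phi>1)"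
    and phi2_lip: "\<exists>L. L-lipschitz_on UNIV \<phi>2" and phi2_bdd: "bdd_below (range \<phi>2)"
  shows "(\<forall>x. Mop l lam \<phi> x =
            ereal (- lam * ln (integral\<^sup>L (Phi x) (\<lambda>\<zeta>. exp (- (\<phi> (x + \<zeta>) + l \<zeta>) / lam)))))
    \<and> Ll-lipschitz_on UNIV (\<lambda>x. real_of_ereal (Mop l lam \<phi> x))
    \<and> (\<exists>\<kappa>1 \<kappa>2. \<kappa>1 > 0 \<and> \<kappa>2 > 0 \<and>
         (\<forall>x. mu_opt l lam \<phi> x \<in> admissible x
            \<and> (\<forall>t\<ge>0. measure (mu_opt l lam \<phi> x) {\<xi>. \<bar>x + \<xi>\<bar> > t}
                       \<le> 2 * \<kappa>1 * exp (- \<kappa>2 * t\<^sup>2))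
            \<and> Mop l lam \<phi> x = objective l lam \<phi> x (mu_opt l lam \<phi> x)))
    \<and> (\<exists>E :: real \<Rightarrow> real. (\<forall>R>0. E R > 0) \<and> (E \<longlongrightarrow> 0) at_top \<and>
         (\<forall>R>0. \<forall>x. \<bar>real_of_ereal (Mop l lam \<phi>1 x) - real_of_ereal (Mop l lam \<phi>2 x)\<bar>
                    \<le> (SUP y\<in>{-R..R}. \<bar>\<phi>1 y - \<phi>2 y\<bar>) + E R))"
proof -
  from phi_lip obtain Lp where Lp: "Lp-lipschitz_on UNIV \<phi>" by blast
  from phi_bdd obtain m where m: "\<forall>y. m \<le> \<phi> y" unfolding bdd_below_def by auto
  from phi1_lip obtain L1 where L1: "L1-lipschitz_on UNIV \<phi>1" by blast
  from phi1_bdd obtain m1 where m1: "\<forall>y. m1 \<le> \<phi>1 y" unfolding bdd_below_def by auto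
  from phi2_lip obtain L2 where L2: "L2-lipschitz_on UNIV \<phi>2" by blast
  from phi2_bdd obtain m2 where m2: "\<forall>y. m2 \<le> \<phi>2 y" unfolding bdd_below_def by auto
  have S: "setting l K Ll lam \<phi> Lp m" by unfold_locales (use l_ge l_lip lam_pos Lp m in auto)
  have S1: "setting l K Ll lam \<phi>1 L1 m1" by unfold_locales (use l_ge l_lip lam_pos L1 m1 in auto)
  have S2: "setting l K Ll lam \<phi>2 L2 m2" by unfold_locales (use l_ge l_lip lam_pos L2 m2 in auto)
  interpret S: setting l K Ll lam \<phi> Lp m by (rule S)
  have P1: "\<forall>x. Mop l lam \<phi> x =
            ereal (- lam * ln (integral\<^sup>L (Phi x) (\<lambda>\<zeta>. exp (- (\<phi> (x + \<zeta>) + l \<zeta>) / lam))))"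
    using S.mu_opt_props(3) unfolding S.Z_def by blast
  have P2: "Ll-lipschitz_on UNIV (\<lambda>x. real_of_ereal (Mop l lam \<phi> x))"
  proof -
    have eq: "(\<lambda>x. real_of_ereal (Mop l lam \<phi> x)) = (\<lambda>x. - lam * ln (S.Z x))"
      using S.mu_opt_props(3) by auto
    show ?thesis unfolding eq by (rule S.M_lip)
  qed
  obtain k where k: "k > 0" "\<forall>x t. t \<ge> 0 \<longrightarrow> measure (mu_opt l lam \<phi> x) {\<xi>. \<bar>x + \<xi>\<bar> > t} \<le> 2 * k * exp (- (1/8) * t\<^sup>2)"
    using S.tail by blast
  have P3: "\<exists>\<kappa>1 \<kappa>2. \<kappa>1 > 0 \<and> \<kappa>2 > 0 \<and>
         (\<forall>x. mu_opt l lam \<phi> x \<in> admissible x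
            \<and> (\<forall>t\<ge>0. measure (mu_opt l lam \<phi> x) {\<xi>. \<bar>x + \<xi>\<bar> > t}
                       \<le> 2 * \<kappa>1 * exp (- \<kappa>2 * t\<^sup>2))
            \<and> Mop l lam \<phi> x = objective l lam \<phi> x (mu_opt l lam \<phi> x))"
    using S.mu_opt_props k by (intro exI[of _ k] exI[of _ "1/8::real"]) auto
  show ?thesis using P1 P2 P3 part4[OF S1 S2] by blast
qed

end
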